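(* For finite magmas, the laws $\mathrm{x}\simeq(\mathrm{x}\diamond(\mathrm{x}\diamond\mathrm{y}))\diamond\mathrm{y}$ and $\mathrm{x}\simeq(\mathrm{x}\diamond\mathrm{y})\diamond((\mathrm{x}\diamond\mathrm{y})\diamond\mathrm{y})$ are equivalent: a finite magma satisfies one if and only if it satisfies the other.
   Context: A magma is a set with a binary operation $\diamond$; it satisfies a law if the identity holds for all assignments of variables. *)

theory Defs
  imports Main
begin

definition magma :: "'a set \<Rightarrow> ('a \<Rightarrow> 'a \<Rightarrow> 'a) \<Rightarrow> bool" where
  "magma S op \<longleftrightarrow> (\<forall>x\<in>S. \<forall>y\<in>S. op x y \<in> S)"

definition satisfies_law_A :: "'a set \<Rightarrow> ('a \<Rightarrow> 'a \<Rightarrow> 'a) \<Rightarrow> bool" where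
  "satisfies_law_A S op \<longleftrightarrow> (\<forall>x\<in>S. \<forall>y\<in>S. x = op (op x (op x y)) y)"

definition satisfies_law_B :: "'a set \<Rightarrow> ('a \<Rightarrow> 'a \<Rightarrow> 'a) \<Rightarrow> bool" where
  "satisfies_law_B S op \<longleftrightarrow> (\<forall>x\<in>S. \<forall>y\<in>S. x = op (op x y) (op (op x y) y))"

end

theory Submission
  imports Defs
begin

theorem mainTheorem16:
  fixes S :: "'a set" and op :: "'a \<Rightarrow> 'a \<Rightarrow> 'a"
  assumes "finite S" and "magma S op"
  shows "satisfies_law_A S op \<longleftrightarrow> satisfies_law_B S op"
proof
  assume A: "satisfies_law_A S op"
  have cl: "\<And>x y. x \<in> S \<Longrightarrow> y \<in> S \<Longrightarrow> op x y \<in> S" using assms(2) by (auto simp: magma_def)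
  have inj: "inj_on (\<lambda>x. op x y) S" if y: "y \<in> S" for y
  proof (rule finite_surj_inj[OF assms(1)])
    show "S \<subseteq> (\<lambda>x. op x y) ` S"
    proof
      fix x assume x: "x \<in> S"
      have "x = op (op x (op x y)) y" using A x y by (auto simp: satisfies_law_A_def)
      moreover have "op x (op x y) \<in> S" using cl x y by blast
      ultimately show "x \<in> (\<lambda>x. op x y) ` S" by blast
    qed
  qed
  show "satisfies_law_B S op" unfolding satisfies_law_B_def
  proof (intro ballI)
    fix x y assume x: "x \<in> S" and y: "y \<in> S"
    have "op (op (op x y) (op (op x y) y)) y = op x y"
      using A cl x y by (auto simp: satisfies_law_A_def)
    moreover have "op (op x y) (op (op x y) y) \<in> S" using cl x y by blast
    ultimately show "x = op (op x y) (op (op x y) y)"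
      using inj[OF y] x unfolding inj_on_def by metis
  qed
next
  assume B: "satisfies_law_B S op"
  have cl: "\<And>x y. x \<in> S \<Longrightarrow> y \<in> S \<Longrightarrow> op x y \<in> S" using assms(2) by (auto simp: magma_def)
  have inj: "inj_on (\<lambda>x. op x y) S" if y: "y \<in> S" for y
    unfolding inj_on_def
  proof (intro ballI impI)
    fix a b assume a: "a \<in> S" and b: "b \<in> S" and e: "op a y = op b y"
    have "a = op (op a y) (op (op a y) y)" using B a y by (auto simp: satisfies_law_B_def)
    also have "\<dots> = op (op b y) (op (op b y) y)" using e by simp
    also have "\<dots> = b" using B b y by (auto simp: satisfies_law_B_def)
    finally show "a = b" .
  qed
  have surj: "(\<lambda>x. op x y) ` S = S" if y: "y \<in> S" for y
    using endo_inj_surj[OF assms(1) _ inj[OF y]] cl y by blast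
  show "satisfies_law_A S op" unfolding satisfies_law_A_def
  proof (intro ballI)
    fix z y assume z: "z \<in> S" and y: "y \<in> S"
    from surj[OF y] z obtain x where x: "x \<in> S" and zx: "z = op x y" by blast
    have "x = op (op x y) (op (op x y) y)" using B x y by (auto simp: satisfies_law_B_def)
    hence "op z (op z y) = x" using zx by simp
    thus "z = op (op z (op z y)) y" using zx by simp
  qed
qed

end
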